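(* Let $G=(V,E)$ be a connected graph with $n$ vertices, $\tau$ a set of types with $|\tau|>1$, $f:\tau\to\mathbb{Q}_{\ge1}$ a fitness function, and $D\in\mathcal D(G,\tau)$. Let $f^*=\max\{f(j): j\in\tau\setminus\tau^+(f)\}$. Then for every $\alpha\in\tau^+(f)$, $\mathbb{E}(A_\alpha(G,\tau,f,D))\le(|\tau^+(f)|-1)n^6+\frac{f(\alpha)}{f(\alpha)-f^*}(n+1)n^3$.
   Context: $\tau^+(f)=\{i\in\tau:f(i)=\max_{j\in\tau}f(j)\}$. For $G=(V,E)$, $N(v)$ is the neighbourhood of $v$. $\Omega$ is the set of states $V\to\tau$; for $S\in\Omega$, $S|_{v\to w}$ equals $S$ except $w$ gets type $S(v)$. The Moran process $M(G,\tau,f,D)$ is the Markov chain on $\Omega$ with $M_0$ drawn from $D$ and, given $M_t$, a vertex $v$ chosen with probability $f(M_t(v))/\sum_uf(M_t(u))$, then $w\in N(v)$ uniformly, and $M_{t+1}=M_t|_{v\to w}$. $V_j(t)=\{v:M_t(v)=j\}$, and $A_j(G,\tau,f,D)=\min\{t\in\mathbb{Z}_{\ge0}:V_j(t)=V\text{ or }V_j(t)=\emptyset\}$. With $k=|\tau|$, $V[k]$ is the set of $k$-tuples of distinct vertices, $\tau[k]$ the set of $k$-tuples of distinct types, $\Omega(\mathbf u,\boldsymbol\gamma)$ the set of states mapping the $i$-th entry of $\mathbf u$ to the $i$-th entry of $\boldsymbol\gamma$ for all $i$. $\mathcal D(G,\tau)$ is the set of distributions $D$ on $\Omega$ for which there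 are distributions $D_{\mathbf u,\boldsymbol\gamma}$ on $\Omega(\mathbf u,\boldsymbol\gamma)$ with $\Pr_D(S)=\frac{1}{|V[k]\times\tau[k]|}\sum_{(\mathbf u,\boldsymbol\gamma)\in V[k]\times\tau[k]}\Pr_{D_{\mathbf u,\boldsymbol\gamma}}(S)$ for all $S$. *)

theory Defs
  imports "HOL-Probability.Probability"
begin

definition simple_graph :: "'v set \<Rightarrow> ('v \<times> 'v) set \<Rightarrow> bool" where
  "simple_graph V E \<longleftrightarrow> finite V \<and> E \<subseteq> V \<times> V \<and> sym E \<and> irrefl E"

definition connected_graph :: "'v set \<Rightarrow> ('v \<times> 'v) set \<Rightarrow> bool" where
  "connected_graph V E \<longleftrightarrow> simple_graph V E \<and> V \<noteq> {} \<and> (\<forall>u\<in>V. \<forall>v\<in>V. (u, v) \<in> E\<^sup>*)"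

definition nbhd :: "('v \<times> 'v) set \<Rightarrow> 'v \<Rightarrow> 'v set" where
  "nbhd E v = {w. (v, w) \<in> E}"

definition max_types :: "'a set \<Rightarrow> ('a \<Rightarrow> rat) \<Rightarrow> 'a set" where
  "max_types tau f = {i \<in> tau. f i = Max (f ` tau)}"

definition states :: "'v set \<Rightarrow> 'a set \<Rightarrow> ('v \<Rightarrow> 'a) set" where
  "states V tau = (V \<rightarrow>\<^sub>E tau)"

definition reproduce :: "('v \<Rightarrow> 'a) \<Rightarrow> 'v \<Rightarrow> 'v \<Rightarrow> ('v \<Rightarrow> 'a)" where
  "reproduce S v w = S(w := S v)"

definition moran_step :: "'v set \<Rightarrow> ('v \<times> 'v) set \<Rightarrow> ('a \<Rightarrow> rat) \<Rightarrow> ('v \<Rightarrow> 'a) \<Rightarrow> ('v \<Rightarrow> 'a) pmf" where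
  "moran_step V E f S =
     bind_pmf (embed_pmf (\<lambda>v. if v \<in> V then real_of_rat (f (S v)) / (\<Sum>u\<in>V. real_of_rat (f (S u))) else 0))
       (\<lambda>v. map_pmf (\<lambda>w. reproduce S v w) (pmf_of_set (nbhd E v)))"

primrec moran_paths :: "'v set \<Rightarrow> ('v \<times> 'v) set \<Rightarrow> ('a \<Rightarrow> rat) \<Rightarrow> ('v \<Rightarrow> 'a) pmf \<Rightarrow> nat \<Rightarrow> ('v \<Rightarrow> 'a) list pmf" where
  "moran_paths V E f D 0 = map_pmf (\<lambda>S. [S]) D"
| "moran_paths V E f D (Suc t) =
     bind_pmf (moran_paths V E f D t) (\<lambda>xs. map_pmf (\<lambda>S'. xs @ [S']) (moran_step V E f (last xs)))"

definition absorbed :: "'v set \<Rightarrow> 'a \<Rightarrow> ('v \<Rightarrow> 'a) \<Rightarrow> bool" where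
  "absorbed V j S \<longleftrightarrow> {v \<in> V. S v = j} = V \<or> {v \<in> V. S v = j} = {}"

text \<open>E(A_j(G,tau,f,D)) = sum_{t>=0} Pr(A_j > t), where A_j > t iff none of M_0..M_t is absorbed.\<close>
definition expected_absorption_time ::
  "'v set \<Rightarrow> ('v \<times> 'v) set \<Rightarrow> ('a \<Rightarrow> rat) \<Rightarrow> ('v \<Rightarrow> 'a) pmf \<Rightarrow> 'a \<Rightarrow> ennreal" where
  "expected_absorption_time V E f D j =
     (\<Sum>t. ennreal (measure_pmf.prob (moran_paths V E f D t) {xs. \<forall>S\<in>set xs. \<not> absorbed V j S}))"

definition distinct_tuples :: "'b set \<Rightarrow> nat \<Rightarrow> 'b list set" where
  "distinct_tuples A k = {xs. length xs = k \<and> distinct xs \<and> set xs \<subseteq> A}"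

definition states_fixing :: "'v set \<Rightarrow> 'a set \<Rightarrow> 'v list \<Rightarrow> 'a list \<Rightarrow> ('v \<Rightarrow> 'a) set" where
  "states_fixing V tau us gs = {S \<in> states V tau. \<forall>i < length us. S (us ! i) = gs ! i}"

definition init_dists :: "'v set \<Rightarrow> 'a set \<Rightarrow> ('v \<Rightarrow> 'a) pmf set" where
  "init_dists V tau = {D. set_pmf D \<subseteq> states V tau \<and>
     (\<exists>Du :: 'v list \<Rightarrow> 'a list \<Rightarrow> ('v \<Rightarrow> 'a) pmf.
        (\<forall>us \<in> distinct_tuples V (card tau). \<forall>gs \<in> distinct_tuples tau (card tau).
            set_pmf (Du us gs) \<subseteq> states_fixing V tau us gs) \<and>
        (\<forall>S. pmf D S = (\<Sum>(us, gs) \<in> distinct_tuples V (card tau) \<times> distinct_tuples tau (card tau).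
                             pmf (Du us gs) S)
                         / real (card (distinct_tuples V (card tau) \<times> distinct_tuples tau (card tau)))))}"

end

theory Submission
  imports Defs
begin

lemma absorb_gen:
  fixes h :: "('v \<Rightarrow> 'a) \<Rightarrow> real"
  assumes h0: "\<And>S. 0 \<le> h S" and hB: "\<And>S. S \<in> I \<Longrightarrow> h S \<le> B"
  and D: "set_pmf D \<subseteq> I"
  and inv: "\<And>S. S \<in> I \<Longrightarrow> set_pmf (moran_step V E f S) \<subseteq> I"
  and drift: "\<And>S. S \<in> I \<Longrightarrow> \<not> absorbed V j S \<Longrightarrow>
      (\<integral>\<^sup>+S'. ennreal (h S') \<partial>moran_step V E f S) + 1 \<le> ennreal (h S)"
  shows "expected_absorption_time V E f D j \<le> ennreal B"
proof -
  let ?P = "moran_paths V E f D"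
  define Q where "Q xs = (\<forall>S\<in>set xs. \<not> absorbed V j S)" for xs
  define c where "c t = (\<integral>\<^sup>+xs. (if Q xs then ennreal (h (last xs)) else 0) \<partial>?P t)" for t
  have supp: "xs \<in> set_pmf (?P t) \<Longrightarrow> xs \<noteq> [] \<and> last xs \<in> I" for t xs
  proof (induction t arbitrary: xs)
    case 0
    then show ?case using D by auto
  next
    case (Suc t)
    then show ?case using inv by fastforce
  qed
  have rec: "c (Suc t) + emeasure (?P t) {xs. Q xs} \<le> c t" for t
  proof -
    have "c (Suc t) = (\<integral>\<^sup>+xs. \<integral>\<^sup>+S'. (if Q (xs@[S']) then ennreal (h S') else 0) \<partial>moran_step V E f (last xs) \<partial>?P t)"
      unfolding c_def by (simp, intro nn_integral_cong, simp)
    moreover have "emeasure (?P t) {xs. Q xs} = (\<integral>\<^sup>+xs. indicator {xs. Q xs} xs \<partial>?P t)"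
      by simp
    ultimately have "c (Suc t) + emeasure (?P t) {xs. Q xs} =
      (\<integral>\<^sup>+xs. (\<integral>\<^sup>+S'. (if Q (xs@[S']) then ennreal (h S') else 0) \<partial>moran_step V E f (last xs)) + indicator {xs. Q xs} xs \<partial>?P t)"
      by (simp add: nn_integral_add)
    also have "\<dots> \<le> c t" unfolding c_def
    proof (rule nn_integral_mono_AE, rule AE_pmfI)
      fix xs assume xs: "xs \<in> set_pmf (?P t)"
      show "(\<integral>\<^sup>+S'. (if Q (xs@[S']) then ennreal (h S') else 0) \<partial>moran_step V E f (last xs)) + indicator {xs. Q xs} xs
         \<le> (if Q xs then ennreal (h (last xs)) else 0)"
      proof (cases "Q xs")
        case True
        have "(\<integral>\<^sup>+S'. (if Q (xs@[S']) then ennreal (h S') else 0) \<partial>moran_step V E f (last xs))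
           \<le> (\<integral>\<^sup>+S'. ennreal (h S') \<partial>moran_step V E f (last xs))"
          by (intro nn_integral_mono) auto
        moreover have "\<not> absorbed V j (last xs)" using True supp[OF xs] unfolding Q_def by auto
        ultimately show ?thesis using True drift[of "last xs"] supp[OF xs]
          by (auto intro: order.trans add_right_mono)
      next
        case False
        then have "\<And>S'. \<not> Q (xs@[S'])" by (simp add: Q_def)
        then show ?thesis using False by simp
      qed
    qed
    finally show ?thesis .
  qed
  have sumb: "(\<Sum>s<t. emeasure (?P s) {xs. Q xs}) + c t \<le> c 0" for t
  proof (induction t)
    case 0 then show ?case by simp
  next
    case (Suc t)
    have "(\<Sum>s<Suc t. emeasure (?P s) {xs. Q xs}) + c (Suc t)
        = (\<Sum>s<t. emeasure (?P s) {xs. Q xs}) + (c (Suc t) + emeasure (?P t) {xs. Q xs})"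
      by (simp add: algebra_simps)
    also have "\<dots> \<le> (\<Sum>s<t. emeasure (?P s) {xs. Q xs}) + c t"
      using rec by (intro add_left_mono) auto
    finally show ?case using Suc.IH by (rule order.trans)
  qed
  have c0: "c 0 \<le> ennreal B"
  proof -
    have "c 0 = (\<integral>\<^sup>+S. (if Q [S] then ennreal (h S) else 0) \<partial>D)"
      unfolding c_def by (simp, intro nn_integral_cong, simp)
    also have "\<dots> \<le> (\<integral>\<^sup>+S. ennreal B \<partial>D)"
    proof (rule nn_integral_mono_AE, rule AE_pmfI)
      fix S assume "S \<in> set_pmf D"
      then have "h S \<le> B" using D hB by auto
      then show "(if Q [S] then ennreal (h S) else 0) \<le> ennreal B" by (simp add: ennreal_leI)
    qed
    finally show ?thesis by simp
  qed
  have "expected_absorption_time V E f D j = (\<Sum>t. emeasure (?P t) {xs. Q xs})"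
    unfolding expected_absorption_time_def Q_def by (simp add: measure_pmf.emeasure_eq_measure)
  also have "\<dots> \<le> ennreal B"
  proof (rule suminf_le_const)
    show "summable (\<lambda>t. emeasure (?P t) {xs. Q xs})" by simp
    fix t show "(\<Sum>s<t. emeasure (?P s) {xs. Q xs}) \<le> ennreal B"
    proof -
      have "(\<Sum>s<t. emeasure (?P s) {xs. Q xs}) \<le> (\<Sum>s<t. emeasure (?P s) {xs. Q xs}) + c t"
        using add_left_mono[of 0 "c t" "\<Sum>s<t. emeasure (?P s) {xs. Q xs}"] by simp
      also have "\<dots> \<le> c 0" by (rule sumb)
      also have "\<dots> \<le> ennreal B" by (rule c0)
      finally show ?thesis .
    qed
  qed
  finally show ?thesis .
qed


locale msetting =
  fixes V :: "'v set" and E :: "('v \<times> 'v) set" and tau :: "'a set"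
    and f :: "'a \<Rightarrow> rat" and \<alpha> :: 'a
  assumes conn: "connected_graph V E" and fin_tau: "finite tau"
    and fit1: "\<forall>i\<in>tau. f i \<ge> 1" and alpha: "\<alpha> \<in> max_types tau f"
begin

definition deg :: "'v \<Rightarrow> real" where "deg v = real (card (nbhd E v))"
definition ind :: "('v \<Rightarrow> 'a) \<Rightarrow> 'v \<Rightarrow> real" where "ind S v = (if S v = \<alpha> then 1 else 0)"
definition phi :: "('v \<Rightarrow> 'a) \<Rightarrow> real" where "phi S = (\<Sum>v\<in>V. ind S v / deg v)"
definition M :: real where "M = (\<Sum>v\<in>V. 1 / deg v)"
definition fit :: "('v \<Rightarrow> 'a) \<Rightarrow> 'v \<Rightarrow> real" where "fit S v = real_of_rat (f (S v))"
definition Ftot :: "('v \<Rightarrow> 'a) \<Rightarrow> real" where "Ftot S = (\<Sum>u\<in>V. fit S u)"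
definition r :: real where "r = real_of_rat (f \<alpha>)"
definition n :: real where "n = real (card V)"
definition ok :: "('v \<Rightarrow> 'a) \<Rightarrow> bool" where "ok S \<longleftrightarrow> S ` V \<subseteq> tau"

lemma finV: "finite V" and EV: "E \<subseteq> V \<times> V" and symE: "sym E" and irrE: "irrefl E"
  and Vne: "V \<noteq> {}"
  using conn by (auto simp: connected_graph_def simple_graph_def)

lemma nbhd_sub: "nbhd E v \<subseteq> V" using EV by (auto simp: nbhd_def)
lemma fin_nbhd: "finite (nbhd E v)" using nbhd_sub finV finite_subset by blast
lemma deg_le: "deg v \<le> n"
  unfolding deg_def n_def using card_mono[OF finV nbhd_sub] by simp
lemma deg_nonneg: "0 \<le> deg v" by (simp add: deg_def)
lemma n_pos: "1 \<le> n" unfolding n_def using finV Vne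
  by (simp add: Suc_leI card_gt_0_iff)

lemma inv_deg_le1: "1 / deg v \<le> 1"
  by (cases "deg v = 0") (auto simp: deg_def)

lemma ind_cases: "ind S v = 0 \<or> ind S v = 1" by (simp add: ind_def)

lemma phi_nonneg: "0 \<le> phi S"
  unfolding phi_def by (intro sum_nonneg) (simp add: ind_def deg_nonneg)
lemma phi_le_M: "phi S \<le> M"
  unfolding phi_def M_def by (intro sum_mono) (simp add: ind_def deg_nonneg divide_right_mono)
lemma M_le_n: "M \<le> n"
proof -
  have "M \<le> (\<Sum>v\<in>V. 1)" unfolding M_def by (intro sum_mono inv_deg_le1)
  then show ?thesis by (simp add: n_def)
qed

lemma alpha_tau: "\<alpha> \<in> tau" and r_max: "i \<in> tau \<Longrightarrow> f i \<le> f \<alpha>"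
  using alpha fin_tau by (auto simp: max_types_def)

lemma fit_ge1: "ok S \<Longrightarrow> v \<in> V \<Longrightarrow> 1 \<le> fit S v"
  using fit1 unfolding ok_def fit_def by (metis image_subset_iff of_rat_1 of_rat_less_eq)
lemma fit_le_r: "ok S \<Longrightarrow> v \<in> V \<Longrightarrow> fit S v \<le> r"
  using r_max unfolding ok_def fit_def r_def by (simp add: image_subset_iff of_rat_less_eq)
lemma Ftot_ge: "ok S \<Longrightarrow> n \<le> Ftot S"
proof -
  assume "ok S"
  then have "(\<Sum>u\<in>V. 1) \<le> Ftot S" unfolding Ftot_def by (intro sum_mono fit_ge1)
  then show ?thesis by (simp add: n_def)
qed
lemma Ftot_pos: "ok S \<Longrightarrow> 0 < Ftot S" using Ftot_ge n_pos by fastforce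
lemma Ftot_le: "ok S \<Longrightarrow> Ftot S \<le> n * r"
proof -
  assume "ok S"
  then have "Ftot S \<le> (\<Sum>u\<in>V. r)" unfolding Ftot_def by (intro sum_mono fit_le_r)
  then show ?thesis by (simp add: n_def)
qed

lemma sum_E: "(\<Sum>v\<in>V. \<Sum>w\<in>nbhd E v. F v w) = (\<Sum>(v,w)\<in>E. F v w)"
proof -
  have "E = Sigma V (nbhd E)" using EV by (auto simp: nbhd_def)
  then show ?thesis using finV fin_nbhd by (simp add: sum.Sigma)
qed

lemma sum_E_swap: "(\<Sum>(v,w)\<in>E. F v w) = (\<Sum>(v,w)\<in>E. F w v)"
  using symE by (intro sum.reindex_bij_witness[where i=prod.swap and j=prod.swap]) (auto dest: symD)

definition p :: "('v \<Rightarrow> 'a) \<Rightarrow> 'v \<Rightarrow> real" where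
  "p S v = (if v \<in> V then real_of_rat (f (S v)) / (\<Sum>u\<in>V. real_of_rat (f (S u))) else 0)"

lemma p_out: "v \<notin> V \<Longrightarrow> p S v = 0" by (simp add: p_def)

lemma p_nonneg: "ok S \<Longrightarrow> 0 \<le> p S v"
  using Ftot_pos[of S] fit_ge1[of S v] unfolding p_def Ftot_def fit_def by auto

lemma p_sum: "ok S \<Longrightarrow> (\<Sum>v\<in>V. p S v) = 1"
proof -
  assume ok: "ok S"
  have "(\<Sum>v\<in>V. p S v) = (\<Sum>v\<in>V. fit S v / Ftot S)"
    unfolding p_def Ftot_def fit_def by (intro sum.cong) auto
  also have "\<dots> = (\<Sum>v\<in>V. fit S v) / Ftot S" by (simp add: sum_divide_distrib)
  finally have "(\<Sum>v\<in>V. p S v) = (\<Sum>v\<in>V. fit S v) / Ftot S" .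
  then show ?thesis using Ftot_pos[OF ok] by (simp add: Ftot_def)
qed

lemma p_prob: "ok S \<Longrightarrow> (\<integral>\<^sup>+x. ennreal (p S x) \<partial>count_space UNIV) = 1"
proof -
  assume ok: "ok S"
  have "(\<integral>\<^sup>+x. ennreal (p S x) \<partial>count_space UNIV) = (\<integral>\<^sup>+x. ennreal (p S x) * indicator V x \<partial>count_space UNIV)"
    by (intro nn_integral_cong) (auto simp: p_def split: split_indicator)
  also have "\<dots> = (\<integral>\<^sup>+x. ennreal (p S x) \<partial>count_space V)"
    by (simp add: nn_integral_count_space_indicator)
  also have "\<dots> = (\<Sum>x\<in>V. ennreal (p S x))" using finV by (simp add: nn_integral_count_space_finite)
  also have "\<dots> = ennreal (\<Sum>x\<in>V. p S x)" using p_nonneg[OF ok] by simp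
  finally show ?thesis using p_sum[OF ok] by simp
qed

lemma step_nn:
  assumes ok: "ok S" and nb: "\<forall>v\<in>V. nbhd E v \<noteq> {}" and g0: "\<And>S. 0 \<le> g S"
  shows "(\<integral>\<^sup>+S'. ennreal (g S') \<partial>moran_step V E f S)
     = ennreal (\<Sum>(v,w)\<in>E. p S v / deg v * g (S(w := S v)))"
proof -
  have eq: "moran_step V E f S = bind_pmf (embed_pmf (p S))
       (\<lambda>v. map_pmf (\<lambda>w. reproduce S v w) (pmf_of_set (nbhd E v)))"
    unfolding moran_step_def p_def by simp
  have pe: "pmf (embed_pmf (p S)) v = p S v" for v
    by (rule pmf_embed_pmf[OF p_nonneg[OF ok] p_prob[OF ok]])
  have se: "set_pmf (embed_pmf (p S)) \<subseteq> V"
  proof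
    fix v assume "v \<in> set_pmf (embed_pmf (p S))"
    then have "p S v \<noteq> 0" using set_embed_pmf[OF p_nonneg[OF ok] p_prob[OF ok]] by blast
    then show "v \<in> V" using p_out by blast
  qed
  have inner: "(\<integral>\<^sup>+w. ennreal (g (reproduce S v w)) \<partial>pmf_of_set (nbhd E v))
      = ennreal (\<Sum>w\<in>nbhd E v. g (S(w := S v)) / deg v)" if "v \<in> V" for v
  proof -
    have ne: "nbhd E v \<noteq> {}" using nb that by auto
    have "(\<integral>\<^sup>+w. ennreal (g (reproduce S v w)) \<partial>pmf_of_set (nbhd E v))
        = (\<Sum>w\<in>nbhd E v. ennreal (g (S(w := S v)))) / of_nat (card (nbhd E v))"
      using ne fin_nbhd by (simp add: nn_integral_pmf_of_set reproduce_def)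
    also have "\<dots> = ennreal (\<Sum>w\<in>nbhd E v. g (S(w := S v))) / ennreal (deg v)"
      using g0 by (simp add: deg_def ennreal_of_nat_eq_real_of_nat sum_nonneg)
    also have "\<dots> = ennreal ((\<Sum>w\<in>nbhd E v. g (S(w := S v))) / deg v)"
      using ne fin_nbhd g0 by (intro divide_ennreal) (auto simp: deg_def card_gt_0_iff sum_nonneg)
    finally show ?thesis by (simp add: sum_divide_distrib)
  qed
  have "(\<integral>\<^sup>+S'. ennreal (g S') \<partial>moran_step V E f S)
     = (\<integral>\<^sup>+v. (\<integral>\<^sup>+w. ennreal (g (reproduce S v w)) \<partial>pmf_of_set (nbhd E v)) \<partial>embed_pmf (p S))"
    unfolding eq by simp
  also have "\<dots> = (\<Sum>v\<in>V. (\<integral>\<^sup>+w. ennreal (g (reproduce S v w)) \<partial>pmf_of_set (nbhd E v)) * pmf (embed_pmf (p S)) v)"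
    using se finV by (intro nn_integral_measure_pmf_support) auto
  also have "\<dots> = (\<Sum>v\<in>V. ennreal (p S v * (\<Sum>w\<in>nbhd E v. g (S(w := S v)) / deg v)))"
    by (intro sum.cong refl) (simp add: inner pe p_nonneg[OF ok] ennreal_mult' mult.commute)
  also have "\<dots> = ennreal (\<Sum>v\<in>V. p S v * (\<Sum>w\<in>nbhd E v. g (S(w := S v)) / deg v))"
    using p_nonneg[OF ok] g0 deg_nonneg by (intro sum_ennreal) (auto intro!: mult_nonneg_nonneg sum_nonneg divide_nonneg_nonneg)
  also have "(\<Sum>v\<in>V. p S v * (\<Sum>w\<in>nbhd E v. g (S(w := S v)) / deg v))
      = (\<Sum>v\<in>V. \<Sum>w\<in>nbhd E v. p S v / deg v * g (S(w := S v)))"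
    by (simp add: sum_distrib_left)
  also have "\<dots> = (\<Sum>(v,w)\<in>E. p S v / deg v * g (S(w := S v)))"
    by (rule sum_E)
  finally show ?thesis .
qed

lemma step_inv: "ok S \<Longrightarrow> S' \<in> set_pmf (moran_step V E f S) \<Longrightarrow> ok S'"
proof -
  assume ok: "ok S" and S': "S' \<in> set_pmf (moran_step V E f S)"
  have eq: "moran_step V E f S = bind_pmf (embed_pmf (p S))
       (\<lambda>v. map_pmf (\<lambda>w. reproduce S v w) (pmf_of_set (nbhd E v)))"
    unfolding moran_step_def p_def by simp
  have se: "set_pmf (embed_pmf (p S)) \<subseteq> V"
  proof
    fix v assume "v \<in> set_pmf (embed_pmf (p S))"
    then have "p S v \<noteq> 0" using set_embed_pmf[OF p_nonneg[OF ok] p_prob[OF ok]] by blast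
    then show "v \<in> V" using p_out by blast
  qed
  from S' obtain v w where "v \<in> V" "S' = S(w := S v)"
    unfolding eq using se by (auto simp: reproduce_def)
  then show "ok S'" using ok by (auto simp: ok_def)
qed

lemma nonabs_witness:
  assumes "\<not> absorbed V \<alpha> S"
  shows "\<exists>x\<in>V. \<exists>y\<in>V. S x = \<alpha> \<and> S y \<noteq> \<alpha>"
  using assms unfolding absorbed_def by blast

lemma boundary_edge:
  assumes "\<not> absorbed V \<alpha> S"
  shows "\<exists>v0 w0. (v0, w0) \<in> E \<and> S v0 = \<alpha> \<and> S w0 \<noteq> \<alpha>"
proof -
  obtain x y where xy: "x \<in> V" "y \<in> V" "S x = \<alpha>" "S y \<noteq> \<alpha>" using nonabs_witness[OF assms] by blast
  have "(x, y) \<in> E\<^sup>*" using conn xy unfolding connected_graph_def by blast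
  then show ?thesis using xy(3,4)
  proof (induction rule: rtrancl_induct)
    case base then show ?case by simp
  next
    case (step y z)
    then show ?case by (cases "S y = \<alpha>") auto
  qed
qed

lemma nbhd_ne:
  assumes "\<not> absorbed V \<alpha> S" "v \<in> V"
  shows "nbhd E v \<noteq> {}"
proof -
  obtain x y where xy: "x \<in> V" "y \<in> V" "S x = \<alpha>" "S y \<noteq> \<alpha>" using nonabs_witness[OF assms(1)] by blast
  then have "x \<noteq> y" by auto
  then have "\<exists>u\<in>V. u \<noteq> v" using xy by (cases "x = v") auto
  then obtain u where u: "u \<in> V" "u \<noteq> v" by blast
  have "(v, u) \<in> E\<^sup>*" using conn u assms(2) unfolding connected_graph_def by blast
  then obtain z where "(v, z) \<in> E" using u(2) by (blast elim: converse_rtranclE)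
  then show ?thesis by (auto simp: nbhd_def)
qed

lemma deg_ge1: "\<not> absorbed V \<alpha> S \<Longrightarrow> v \<in> V \<Longrightarrow> 1 \<le> deg v"
  using nbhd_ne[of S v] fin_nbhd[of v] by (simp add: deg_def Suc_leI card_gt_0_iff)

lemma E_V: "(v, w) \<in> E \<Longrightarrow> v \<in> V \<and> w \<in> V \<and> v \<noteq> w"
  using EV irrE by (auto simp: irrefl_def)

lemma phi_upd:
  assumes "(v, w) \<in> E"
  shows "phi (S(w := S v)) = phi S + (ind S v - ind S w) / deg w"
proof -
  have w: "w \<in> V" using E_V[OF assms] by auto
  define R where "R = (\<Sum>u\<in>V - {w}. ind S u / deg u)"
  have 1: "phi (S(w := S v)) = ind S v / deg w + R"
  proof -
    have "phi (S(w := S v)) = ind (S(w := S v)) w / deg w + (\<Sum>u\<in>V - {w}. ind (S(w := S v)) u / deg u)"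
      unfolding phi_def using finV w by (simp add: sum.remove del: fun_upd_apply)
    moreover have "(\<Sum>u\<in>V - {w}. ind (S(w := S v)) u / deg u) = R"
      unfolding R_def by (intro sum.cong) (auto simp: ind_def)
    moreover have "ind (S(w := S v)) w = ind S v" by (simp add: ind_def)
    ultimately show ?thesis by simp
  qed
  have 2: "phi S = ind S w / deg w + R"
    unfolding phi_def R_def using finV w by (simp add: sum.remove)
  show ?thesis unfolding 1 2 by (simp add: diff_divide_distrib)
qed

lemma q_sum:
  assumes "ok S" "\<not> absorbed V \<alpha> S"
  shows "(\<Sum>(v,w)\<in>E. p S v / deg v) = 1"
proof -
  have "(\<Sum>(v,w)\<in>E. p S v / deg v) = (\<Sum>v\<in>V. \<Sum>w\<in>nbhd E v. p S v / deg v)"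
    by (rule sum_E[symmetric])
  also have "\<dots> = (\<Sum>v\<in>V. p S v)"
  proof (intro sum.cong refl)
    fix v assume "v \<in> V"
    then have "1 \<le> deg v" using deg_ge1 assms by auto
    then show "(\<Sum>w\<in>nbhd E v. p S v / deg v) = p S v" by (simp add: deg_def)
  qed
  finally show ?thesis using p_sum[OF assms(1)] by simp
qed

definition X :: "('v \<Rightarrow> 'a) \<Rightarrow> real" where
  "X S = (\<Sum>(v,w)\<in>E. p S v / deg v * ((ind S v - ind S w) / deg w))"
definition Y :: "('v \<Rightarrow> 'a) \<Rightarrow> real" where
  "Y S = (\<Sum>(v,w)\<in>E. p S v / deg v * ((ind S v - ind S w) / deg w)^2)"

lemma p_V: "v \<in> V \<Longrightarrow> p S v = fit S v / Ftot S"
  by (simp add: p_def fit_def Ftot_def)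

lemma X_bound:
  assumes ok: "ok S" and na: "\<not> absorbed V \<alpha> S"
    and e: "(v0, w0) \<in> E" "S v0 = \<alpha>" "S w0 \<noteq> \<alpha>"
  shows "(r - fit S w0) / (Ftot S * deg v0 * deg w0) \<le> X S"
proof -
  define a where "a v w = p S v * (ind S v - ind S w) / (deg v * deg w)" for v w
  define b where "b v w = (p S v - p S w) * (ind S v - ind S w) / (deg v * deg w)" for v w
  have XA: "X S = (\<Sum>(v,w)\<in>E. a v w)" unfolding X_def a_def
    by (intro sum.cong refl) auto
  have "2 * X S = (\<Sum>(v,w)\<in>E. a v w) + (\<Sum>(v,w)\<in>E. a w v)"
    using XA sum_E_swap[of a] by simp
  also have "\<dots> = (\<Sum>(v,w)\<in>E. b v w)"
  proof -
    have ab: "a v w + a w v = b v w" for v w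
    proof -
      have num: "p S v * (ind S v - ind S w) + p S w * (ind S w - ind S v)
          = (p S v - p S w) * (ind S v - ind S w)" by algebra
      have "a v w + a w v = (p S v * (ind S v - ind S w) + p S w * (ind S w - ind S v)) / (deg v * deg w)"
        unfolding a_def by (simp add: add_divide_distrib mult.commute)
      then show ?thesis unfolding num b_def .
    qed
    show ?thesis unfolding sum.distrib[symmetric] by (intro sum.cong refl) (auto simp: ab)
  qed
  finally have X2: "2 * X S = (\<Sum>(v,w)\<in>E. b v w)" .
  have bnn: "0 \<le> b v w" if "(v,w) \<in> E" for v w
  proof -
    have vw: "v \<in> V" "w \<in> V" using E_V[OF that] by auto
    have F: "0 < Ftot S" using Ftot_pos[OF ok] .
    have "0 \<le> (p S v - p S w) * (ind S v - ind S w)"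
    proof (cases "S v = \<alpha>"; cases "S w = \<alpha>")
      assume "S v = \<alpha>" "S w \<noteq> \<alpha>"
      then have "p S w \<le> p S v" using vw fit_le_r[OF ok, of w] F
        by (simp add: p_V fit_def r_def divide_right_mono)
      then show ?thesis using \<open>S v = \<alpha>\<close> \<open>S w \<noteq> \<alpha>\<close> by (simp add: ind_def)
    next
      assume "S v \<noteq> \<alpha>" "S w = \<alpha>"
      then have "p S v \<le> p S w" using vw fit_le_r[OF ok, of v] F
        by (simp add: p_V fit_def r_def divide_right_mono)
      then show ?thesis using \<open>S v \<noteq> \<alpha>\<close> \<open>S w = \<alpha>\<close> by (simp add: ind_def)
    qed (auto simp: ind_def)
    then show ?thesis unfolding b_def by (simp add: deg_nonneg)
  qed
  have e2: "(w0, v0) \<in> E" using e(1) symE by (auto dest: symD)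
  have neq: "(v0, w0) \<noteq> (w0, v0)" using e by auto
  have "(\<Sum>(v,w)\<in>{(v0,w0),(w0,v0)}. b v w) \<le> (\<Sum>(v,w)\<in>E. b v w)"
    using e(1) e2 finV EV bnn
    by (intro sum_mono2) (auto intro: finite_subset[of E "V \<times> V"])
  also have "(\<Sum>(v,w)\<in>{(v0,w0),(w0,v0)}. b v w) = 2 * b v0 w0"
    using neq by (simp add: b_def field_simps)
  finally have "b v0 w0 \<le> X S" using X2 by simp
  moreover have "b v0 w0 = (r - fit S w0) / (Ftot S * deg v0 * deg w0)"
    using E_V[OF e(1)] e by (simp add: b_def p_V ind_def fit_def r_def field_simps diff_divide_distrib)
  ultimately show ?thesis by simp
qed

lemma X_nonneg:
  assumes ok: "ok S" and na: "\<not> absorbed V \<alpha> S"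
  shows "0 \<le> X S"
proof -
  obtain v0 w0 where e: "(v0, w0) \<in> E" "S v0 = \<alpha>" "S w0 \<noteq> \<alpha>" using boundary_edge[OF na] by blast
  have "0 \<le> (r - fit S w0) / (Ftot S * deg v0 * deg w0)"
    using fit_le_r[OF ok, of w0] E_V[OF e(1)] Ftot_pos[OF ok] deg_nonneg
    by (intro divide_nonneg_nonneg) auto
  then show ?thesis using X_bound[OF ok na e] by linarith
qed

lemma Y_bound:
  assumes ok: "ok S" and e: "(v0, w0) \<in> E" "S v0 = \<alpha>" "S w0 \<noteq> \<alpha>"
  shows "p S v0 / deg v0 * (1 / deg w0)^2 \<le> Y S"
proof -
  define F where "F = (\<lambda>(v,w). p S v / deg v * ((ind S v - ind S w) / deg w)^2)"
  have finE: "finite E" using finV EV by (meson finite_SigmaI finite_subset)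
  have "F (v0, w0) \<le> sum F E"
    using e(1) finE
    by (intro member_le_sum) (auto simp: F_def intro!: mult_nonneg_nonneg divide_nonneg_nonneg p_nonneg[OF ok] deg_nonneg)
  then have "p S v0 / deg v0 * ((ind S v0 - ind S w0) / deg w0)^2 \<le> Y S"
    unfolding Y_def F_def by simp
  then show ?thesis using e by (simp add: ind_def)
qed

lemma step_expect:
  assumes ok: "ok S" and na: "\<not> absorbed V \<alpha> S"
    and g0: "\<And>S. 0 \<le> g S"
    and gform: "\<And>v w. (v,w) \<in> E \<Longrightarrow> g (S(w := S v)) = G (phi S + (ind S v - ind S w) / deg w)"
    and bound: "(\<Sum>(v,w)\<in>E. p S v / deg v * G (phi S + (ind S v - ind S w) / deg w)) \<le> g S - 1"
  shows "(\<integral>\<^sup>+S'. ennreal (g S') \<partial>moran_step V E f S) + 1 \<le> ennreal (g S)"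
proof -
  have nb: "\<forall>v\<in>V. nbhd E v \<noteq> {}" using nbhd_ne[OF na] by auto
  define W where "W = (\<Sum>(v,w)\<in>E. p S v / deg v * g (S(w := S v)))"
  have W: "W = (\<Sum>(v,w)\<in>E. p S v / deg v * G (phi S + (ind S v - ind S w) / deg w))"
    unfolding W_def by (intro sum.cong refl) (auto simp: gform)
  have W0: "0 \<le> W" unfolding W_def
    by (intro sum_nonneg) (auto intro!: mult_nonneg_nonneg divide_nonneg_nonneg p_nonneg[OF ok] deg_nonneg g0)
  have "(\<integral>\<^sup>+S'. ennreal (g S') \<partial>moran_step V E f S) + 1 = ennreal (W + 1)"
    using step_nn[OF ok nb g0] W0 unfolding W_def by (simp add: ennreal_plus)
  also have "\<dots> \<le> ennreal (g S)" using bound W by (intro ennreal_leI) simp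
  finally show ?thesis .
qed

lemma one_le_mult3: "1 \<le> (a::real) \<Longrightarrow> 1 \<le> b \<Longrightarrow> 1 \<le> a * b"
  using mult_mono[of 1 a 1 b] by simp


lemma driftA:
  assumes ok: "ok S" and na: "\<not> absorbed V \<alpha> S"
  shows "(\<integral>\<^sup>+S'. ennreal (n^4 * (M^2 - (phi S')^2)) \<partial>moran_step V E f S) + 1
      \<le> ennreal (n^4 * (M^2 - (phi S)^2))"
proof (rule step_expect[OF ok na, where G="\<lambda>x. n^4 * (M^2 - x^2)"])
  show "0 \<le> n^4 * (M^2 - (phi S')^2)" for S'
    using phi_nonneg[of S'] phi_le_M[of S'] n_pos by (auto intro!: mult_nonneg_nonneg power_mono)
  show "n^4 * (M^2 - (phi (S(w := S v)))^2) = n^4 * (M^2 - (phi S + (ind S v - ind S w) / deg w)^2)"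
    if "(v,w) \<in> E" for v w using phi_upd[OF that] by simp
  define q where "q v = p S v / deg v" for v
  define D where "D v w = (ind S v - ind S w) / deg w" for v w
  have qs: "(\<Sum>(v,w)\<in>E. q v) = 1" using q_sum[OF ok na] by (simp add: q_def)
  have "(\<Sum>(v,w)\<in>E. q v * (n^4 * (M^2 - (phi S + D v w)^2)))
      = (\<Sum>(v,w)\<in>E. n^4 * M^2 * q v - n^4 * (phi S)^2 * q v - 2 * n^4 * phi S * (q v * D v w) - n^4 * (q v * (D v w)^2))"
    by (intro sum.cong refl) (auto simp: power2_eq_square algebra_simps)
  also have "\<dots> = n^4 * M^2 * (\<Sum>(v,w)\<in>E. q v) - n^4 * (phi S)^2 * (\<Sum>(v,w)\<in>E. q v)
      - 2 * n^4 * phi S * (\<Sum>(v,w)\<in>E. q v * D v w) - n^4 * (\<Sum>(v,w)\<in>E. q v * (D v w)^2)"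
    by (simp add: sum_subtractf sum_distrib_left case_prod_unfold)
  also have "\<dots> = n^4 * (M^2 - (phi S)^2) - 2 * n^4 * phi S * X S - n^4 * Y S"
    using qs by (simp add: X_def Y_def q_def D_def algebra_simps)
  also have "\<dots> \<le> n^4 * (M^2 - (phi S)^2) - 1"
  proof -
    obtain v0 w0 where e: "(v0, w0) \<in> E" "S v0 = \<alpha>" "S w0 \<noteq> \<alpha>" using boundary_edge[OF na] by blast
    have v0: "v0 \<in> V" and w0: "w0 \<in> V" using E_V[OF e(1)] by auto
    have d1: "1 \<le> deg v0" "1 \<le> deg w0" using deg_ge1[OF na] v0 w0 by auto
    have F: "0 < Ftot S" "Ftot S \<le> n * r" using Ftot_pos[OF ok] Ftot_le[OF ok] by auto
    have r0: "0 < r" using fit_ge1[OF ok v0] e(2) by (simp add: fit_def r_def)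
    have pv: "p S v0 = r / Ftot S" using v0 e(2) by (simp add: p_V fit_def r_def)
    have a1: "1 \<le> p S v0 * n" using F r0 n_pos unfolding pv
      by (simp add: field_simps mult.commute)
    have a2: "1 \<le> n / deg v0" using d1 deg_le[of v0] by simp
    have a3: "1 \<le> (n / deg w0)^2" using d1 deg_le[of w0] by simp
    have "1 \<le> (p S v0 * n) * (n / deg v0) * (n / deg w0)^2"
      by (rule one_le_mult3[OF one_le_mult3[OF a1 a2] a3])
    also have "\<dots> = n^4 * (p S v0 / deg v0 * (1 / deg w0)^2)"
      by (simp add: power2_eq_square field_simps power4_eq_xxxx)
    also have "\<dots> \<le> n^4 * Y S" using Y_bound[OF ok e] n_pos by (intro mult_left_mono) auto
    finally have "1 \<le> n^4 * Y S" .
    moreover have "0 \<le> 2 * n^4 * phi S * X S"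
      using phi_nonneg[of S] X_nonneg[OF ok na] n_pos by auto
    ultimately show ?thesis by linarith
  qed
  finally show "(\<Sum>(v,w)\<in>E. p S v / deg v * (n^4 * (M^2 - (phi S + (ind S v - ind S w) / deg w)^2)))
      \<le> n^4 * (M^2 - (phi S)^2) - 1" by (simp add: q_def D_def)
qed


lemma driftB:
  assumes ok: "ok S" and na: "\<not> absorbed V \<alpha> S"
    and mt: "max_types tau f = {\<alpha>}" and ne: "tau - max_types tau f \<noteq> {}"
    and fs_def: "fs = real_of_rat (Max (f ` (tau - max_types tau f)))"
    and dl: "dl = (r - fs) / (r * n^3)"
  shows "(\<integral>\<^sup>+S'. ennreal ((M - phi S') / dl) \<partial>moran_step V E f S) + 1
      \<le> ennreal ((M - phi S) / dl)"
proof -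
  have finT: "finite (tau - max_types tau f)" using fin_tau by simp
  have fs_ge: "real_of_rat (f i) \<le> fs" if "i \<in> tau" "i \<noteq> \<alpha>" for i
  proof -
    have "i \<in> tau - max_types tau f" using that mt by auto
    then have "f i \<le> Max (f ` (tau - max_types tau f))" using finT by simp
    then show ?thesis unfolding fs_def by (simp add: of_rat_less_eq)
  qed
  obtain j where j: "j \<in> tau - max_types tau f" using ne by blast
  have fs_in: "Max (f ` (tau - max_types tau f)) \<in> f ` (tau - max_types tau f)"
    using finT ne by (intro Max_in) auto
  then obtain i where i: "i \<in> tau" "i \<notin> max_types tau f" "Max (f ` (tau - max_types tau f)) = f i" by auto
  have "f i \<noteq> f \<alpha>" using i alpha by (auto simp: max_types_def)
  then have "f i < f \<alpha>" using r_max[OF i(1)] by simp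
  then have fs_lt: "fs < r" unfolding fs_def r_def i(3) by (simp add: of_rat_less)
  have r1: "1 \<le> r" using fit1 alpha_tau unfolding r_def by (metis of_rat_1 of_rat_less_eq)
  have dl0: "0 < dl" unfolding dl using fs_lt r1 n_pos by (intro divide_pos_pos) auto
  obtain v0 w0 where e: "(v0, w0) \<in> E" "S v0 = \<alpha>" "S w0 \<noteq> \<alpha>" using boundary_edge[OF na] by blast
  have v0: "v0 \<in> V" and w0: "w0 \<in> V" using E_V[OF e(1)] by auto
  have d1: "1 \<le> deg v0" "1 \<le> deg w0" using deg_ge1[OF na] v0 w0 by auto
  have F: "0 < Ftot S" "Ftot S \<le> n * r" using Ftot_pos[OF ok] Ftot_le[OF ok] by auto
  have fw: "fit S w0 \<le> fs" using fs_ge[of "S w0"] ok w0 e(3) by (auto simp: ok_def fit_def)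
  have Xd: "dl \<le> X S"
  proof -
    have den: "Ftot S * deg v0 * deg w0 \<le> (n * r) * n * n"
      using F d1 deg_le[of v0] deg_le[of w0] n_pos r1
      by (intro mult_mono) auto
    have "dl = (r - fs) / ((n * r) * n * n)" unfolding dl by (simp add: power3_eq_cube algebra_simps)
    also have "\<dots> \<le> (r - fs) / (Ftot S * deg v0 * deg w0)"
      using den fs_lt F d1 n_pos r1 by (intro divide_left_mono) (auto intro!: mult_pos_pos)
    also have "\<dots> \<le> (r - fit S w0) / (Ftot S * deg v0 * deg w0)"
      using fw F d1 by (intro divide_right_mono) auto
    also have "\<dots> \<le> X S" by (rule X_bound[OF ok na e])
    finally show ?thesis .
  qed
  show ?thesis
  proof (rule step_expect[OF ok na, where G="\<lambda>x. (M - x) / dl"])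
    show "0 \<le> (M - phi S') / dl" for S'
      using phi_le_M[of S'] dl0 by simp
    show "(M - phi (S(w := S v))) / dl = (M - (phi S + (ind S v - ind S w) / deg w)) / dl"
      if "(v,w) \<in> E" for v w using phi_upd[OF that] by simp
    define q where "q v = p S v / deg v" for v
    define D where "D v w = (ind S v - ind S w) / deg w" for v w
    have qs: "(\<Sum>(v,w)\<in>E. q v) = 1" using q_sum[OF ok na] by (simp add: q_def)
    have "(\<Sum>(v,w)\<in>E. q v * ((M - (phi S + D v w)) / dl))
        = (\<Sum>(v,w)\<in>E. (M * q v - phi S * q v - q v * D v w) / dl)"
      by (intro sum.cong refl) (auto simp: algebra_simps)
    also have "\<dots> = (M * (\<Sum>(v,w)\<in>E. q v) - phi S * (\<Sum>(v,w)\<in>E. q v) - (\<Sum>(v,w)\<in>E. q v * D v w)) / dl"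
      by (simp add: sum_divide_distrib[symmetric] sum_subtractf sum_distrib_left case_prod_unfold)
    also have "\<dots> = (M - phi S - X S) / dl"
      using qs by (simp add: X_def q_def D_def)
    also have "\<dots> \<le> (M - phi S) / dl - 1"
    proof -
      have "(M - phi S - X S) / dl = (M - phi S) / dl - X S / dl" by (simp add: diff_divide_distrib)
      moreover have "1 \<le> X S / dl" using Xd dl0 by simp
      ultimately show ?thesis by linarith
    qed
    finally show "(\<Sum>(v,w)\<in>E. p S v / deg v * ((M - (phi S + (ind S v - ind S w) / deg w)) / dl))
        \<le> (M - phi S) / dl - 1" by (simp add: q_def D_def)
  qed
qed


lemma fs_lt:
  assumes ne: "tau - max_types tau f \<noteq> {}"
  shows "real_of_rat (Max (f ` (tau - max_types tau f))) < r"
proof -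
  have finT: "finite (tau - max_types tau f)" using fin_tau by simp
  have "Max (f ` (tau - max_types tau f)) \<in> f ` (tau - max_types tau f)"
    using finT ne by (intro Max_in) auto
  then obtain i where i: "i \<in> tau" "i \<notin> max_types tau f" "Max (f ` (tau - max_types tau f)) = f i" by auto
  have "f i \<noteq> f \<alpha>" using i alpha by (auto simp: max_types_def)
  then have "f i < f \<alpha>" using r_max[OF i(1)] by simp
  then show ?thesis unfolding r_def i(3) by (simp add: of_rat_less)
qed

end

theorem corollary20:
  fixes V :: "'v set" and E :: "('v \<times> 'v) set" and tau :: "'a set"
    and f :: "'a \<Rightarrow> rat" and D :: "('v \<Rightarrow> 'a) pmf" and \<alpha> :: 'a
  assumes "connected_graph V E"
    and "finite tau" and "card tau > 1"
    and "\<forall>i\<in>tau. f i \<ge> 1"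
    and "D \<in> init_dists V tau"
    and "tau - max_types tau f \<noteq> {}"
    and "\<alpha> \<in> max_types tau f"
  shows "expected_absorption_time V E f D \<alpha> \<le>
    ennreal ((real (card (max_types tau f)) - 1) * real (card V) ^ 6
      + real_of_rat (f \<alpha>) / (real_of_rat (f \<alpha>) - real_of_rat (Max (f ` (tau - max_types tau f))))
        * (real (card V) + 1) * real (card V) ^ 3)"
proof -
  interpret msetting V E tau f \<alpha> using assms by unfold_locales auto
  define fs where "fs = real_of_rat (Max (f ` (tau - max_types tau f)))"
  define RHS where "RHS = (real (card (max_types tau f)) - 1) * real (card V) ^ 6
      + real_of_rat (f \<alpha>) / (real_of_rat (f \<alpha>) - real_of_rat (Max (f ` (tau - max_types tau f))))
        * (real (card V) + 1) * real (card V) ^ 3"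
  have RHS: "RHS = (real (card (max_types tau f)) - 1) * n ^ 6 + r / (r - fs) * (n + 1) * n ^ 3"
    unfolding RHS_def n_def r_def fs_def by simp
  have fslt: "fs < r" unfolding fs_def using fs_lt[OF assms(6)] .
  have r1: "1 \<le> r" using fit1 alpha_tau unfolding r_def by (metis of_rat_1 of_rat_less_eq)
  have Dok: "set_pmf D \<subseteq> {S. ok S}"
    using assms(5) unfolding init_dists_def states_def ok_def by (auto simp: PiE_def Pi_def)
  have inv: "\<And>S. S \<in> {S. ok S} \<Longrightarrow> set_pmf (moran_step V E f S) \<subseteq> {S. ok S}"
    using step_inv by auto
  have finmt: "finite (max_types tau f)" using fin_tau by (simp add: max_types_def)
  have cm: "1 \<le> card (max_types tau f)" using finmt alpha
    by (metis One_nat_def Suc_leI card_gt_0_iff empty_iff)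
  have sec0: "0 \<le> r / (r - fs) * (n + 1) * n ^ 3" using fslt r1 n_pos by simp
  show ?thesis
  proof (cases "card (max_types tau f) = 1")
    case True
    then have mt: "max_types tau f = {\<alpha>}" using alpha by (metis card_1_singletonE singletonD)
    define dl where "dl = (r - fs) / (r * n^3)"
    have dl0: "0 < dl" unfolding dl_def using fslt r1 n_pos by (intro divide_pos_pos) auto
    have "expected_absorption_time V E f D \<alpha> \<le> ennreal (n / dl)"
    proof (rule absorb_gen[where h="\<lambda>S. (M - phi S) / dl" and I="{S. ok S}"])
      show "0 \<le> (M - phi S) / dl" for S using phi_le_M[of S] dl0 by simp
      show "(M - phi S) / dl \<le> n / dl" for S
        using phi_nonneg[of S] M_le_n dl0 by (intro divide_right_mono) auto
      show "set_pmf D \<subseteq> {S. ok S}" by (rule Dok)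
      show "\<And>S. S \<in> {S. ok S} \<Longrightarrow> set_pmf (moran_step V E f S) \<subseteq> {S. ok S}" by (rule inv)
      show "(\<integral>\<^sup>+S'. ennreal ((M - phi S') / dl) \<partial>moran_step V E f S) + 1 \<le> ennreal ((M - phi S) / dl)"
        if "S \<in> {S. ok S}" "\<not> absorbed V \<alpha> S" for S
        using driftB[of S fs dl] that mt assms(6) fs_def dl_def by auto
    qed
    also have "n / dl \<le> RHS"
    proof -
      have "n / dl = r / (r - fs) * n * n^3" unfolding dl_def using fslt r1 n_pos
        by (simp add: field_simps power3_eq_cube)
      also have "\<dots> \<le> r / (r - fs) * (n + 1) * n^3"
        using fslt r1 n_pos by (intro mult_right_mono mult_left_mono) auto
      finally show ?thesis unfolding RHS using True by simp
    qed
    then have "ennreal (n / dl) \<le> ennreal RHS" by (rule ennreal_leI)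
    finally show ?thesis unfolding RHS_def .
  next
    case False
    then have c2: "2 \<le> card (max_types tau f)" using cm by linarith
    have "expected_absorption_time V E f D \<alpha> \<le> ennreal (n^6)"
    proof (rule absorb_gen[where h="\<lambda>S. n^4 * (M^2 - (phi S)^2)" and I="{S. ok S}"])
      show "0 \<le> n^4 * (M^2 - (phi S)^2)" for S
        using phi_nonneg[of S] phi_le_M[of S] n_pos by (auto intro!: mult_nonneg_nonneg power_mono)
      show "n^4 * (M^2 - (phi S)^2) \<le> n^6" for S
      proof -
        have "M^2 - (phi S)^2 \<le> n^2"
          using phi_nonneg[of S] M_le_n phi_le_M[of S] by (smt (verit) power_mono zero_le_power2)
        then have "n^4 * (M^2 - (phi S)^2) \<le> n^4 * n^2" using n_pos by (intro mult_left_mono) auto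
        then show ?thesis by (simp add: power_add[symmetric])
      qed
      show "set_pmf D \<subseteq> {S. ok S}" by (rule Dok)
      show "\<And>S. S \<in> {S. ok S} \<Longrightarrow> set_pmf (moran_step V E f S) \<subseteq> {S. ok S}" by (rule inv)
      show "(\<integral>\<^sup>+S'. ennreal (n^4 * (M^2 - (phi S')^2)) \<partial>moran_step V E f S) + 1 \<le> ennreal (n^4 * (M^2 - (phi S)^2))"
        if "S \<in> {S. ok S}" "\<not> absorbed V \<alpha> S" for S
        using driftA[of S] that by auto
    qed
    also have "n^6 \<le> RHS"
    proof -
      have "1 \<le> real (card (max_types tau f)) - 1" using c2 by simp
      then have "n^6 \<le> (real (card (max_types tau f)) - 1) * n^6"
        using n_pos by (metis mult_1 mult_right_mono zero_le_power order.trans zero_le_one)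
      then show ?thesis unfolding RHS using sec0 by linarith
    qed
    then have "ennreal (n^6) \<le> ennreal RHS" by (rule ennreal_leI)
    finally show ?thesis unfolding RHS_def .
  qed
qed

end
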